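(* Let $\mathbf L\in\mathbb R_+^{n\times k}$. Let $\mathbf p\in\Delta_n$ and $t\in\operatorname{argmin}_{t'\in[k]}\mathbf p^\top\boldsymbol\ell_{t'}$ (equivalently $\mathbf p\in\mathcal Q^{\mathbf L}_t$). Then \[ \mathrm{CCdim}(\mathbf L)\ \ge\ \|\mathbf p\|_0-\mu_{\mathcal Q^{\mathbf L}_t}(\mathbf p)-1 . \]
   Context: Notation: $[m]=\{1,\dots,m\}$; $\Delta_n=\{\mathbf p\in\mathbb R_+^n:\sum_i p_i=1\}$; $\|\mathbf p\|_0$ is the number of nonzero entries of $\mathbf p$. A loss matrix $\mathbf L\in\mathbb R_+^{n\times k}$ has columns $\boldsymbol\ell_t$, $t\in[k]$. Standing assumption: for each $t\in[k]$ there is $\mathbf p\in\Delta_n$ with $\operatorname{argmin}_{t'}\mathbf p^\top\boldsymbol\ell_{t'}=\{t\}$. Trigger probability set: $\mathcal Q^{\mathbf L}_t=\{\mathbf p\in\Delta_n: t\in\operatorname{argmin}_{t'\in[k]}\mathbf p^\top\boldsymbol\ell_{t'}\}$. For a convex set $\mathcal Q\subseteq\mathbb R^n$ and $\mathbf p\in\mathcal Q$, $\mathcal F_{\mathcal Q}(\mathbf p)=\{\mathbf v:\exists\epsilon_0>0,\ \mathbf p+\epsilon\mathbf v\in\mathcal Q\ \forall\epsilon\in(0,\epsilon_0)\}$ and $\mu_{\mathcal Q}(\mathbf p)=\dim(\mathcal F_{\mathcal Q}(\mathbf p)\cap(-\mathcal F_{\mathcal Q}(\mathbf p)))$. A surrogate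 loss $\boldsymbol\psi:\mathcal C\to\mathbb R_+^n$ ($\mathcal C\subseteq\mathbb R^d$ convex) is $\mathbf L$-calibrated if there is $\mathrm{pred}:\mathcal C\to[k]$ such that for all $\mathbf q\in\Delta_n$: $\inf_{\mathbf u\in\mathcal C:\mathrm{pred}(\mathbf u)\notin\operatorname{argmin}_{t}\mathbf q^\top\boldsymbol\ell_{t}}\mathbf q^\top\boldsymbol\psi(\mathbf u)>\inf_{\mathbf u\in\mathcal C}\mathbf q^\top\boldsymbol\psi(\mathbf u)$. $\mathrm{CCdim}(\mathbf L)$ is the smallest $d\in\mathbb Z_+$ for which there exist a convex set $\mathcal C\subseteq\mathbb R^d$ and a convex (componentwise convex) $\mathbf L$-calibrated surrogate $\boldsymbol\psi:\mathcal C\to\mathbb R_+^n$ ($\infty$ if none exists). *)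

theory Defs
  imports "HOL-Analysis.Analysis" "HOL-Library.Extended_Nat" "HOL-Library.Extended_Real"
begin

definition prob_simplex :: "(real ^ 'n) set" where
  "prob_simplex = {p. (\<forall>i. 0 \<le> p $ i) \<and> (\<Sum>i\<in>UNIV. p $ i) = 1}"

definition l0norm :: "real ^ 'n \<Rightarrow> nat" where
  "l0norm p = card {i. p $ i \<noteq> 0}"

text \<open>Loss matrix L with rows indexed by 'n (outcomes) and columns by 'k (predictions);
  the column t is the loss vector of prediction t.\<close>
definition loss_argmin :: "real ^ 'k ^ 'n \<Rightarrow> real ^ 'n \<Rightarrow> 'k set" where
  "loss_argmin L p = {t. \<forall>t'. p \<bullet> column t L \<le> p \<bullet> column t' L}"

definition trigger_set :: "real ^ 'k ^ 'n \<Rightarrow> 'k \<Rightarrow> (real ^ 'n) set" where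
  "trigger_set L t = {p \<in> prob_simplex. t \<in> loss_argmin L p}"

definition feasible_dirs :: "'a::real_vector set \<Rightarrow> 'a \<Rightarrow> 'a set" where
  "feasible_dirs Q p = {v. \<exists>e0>0. \<forall>e. 0 < e \<and> e < e0 \<longrightarrow> p + e *\<^sub>R v \<in> Q}"

definition mu_dim :: "'a::euclidean_space set \<Rightarrow> 'a \<Rightarrow> nat" where
  "mu_dim Q p = dim (feasible_dirs Q p \<inter> uminus ` feasible_dirs Q p)"

text \<open>Points of R^d are represented as functions nat => real vanishing outside {..<d}.
  Convexity for such sets/functions is spelled out explicitly.\<close>
definition Rd :: "nat \<Rightarrow> (nat \<Rightarrow> real) set" where
  "Rd d = {u. \<forall>i\<ge>d. u i = 0}"

definition convex_fset :: "(nat \<Rightarrow> real) set \<Rightarrow> bool" where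
  "convex_fset C = (\<forall>x\<in>C. \<forall>y\<in>C. \<forall>a::real. 0 \<le> a \<and> a \<le> 1 \<longrightarrow>
      (\<lambda>i. a * x i + (1 - a) * y i) \<in> C)"

definition convex_fon :: "(nat \<Rightarrow> real) set \<Rightarrow> ((nat \<Rightarrow> real) \<Rightarrow> real) \<Rightarrow> bool" where
  "convex_fon C f = (\<forall>x\<in>C. \<forall>y\<in>C. \<forall>a::real. 0 \<le> a \<and> a \<le> 1 \<longrightarrow>
      f (\<lambda>i. a * x i + (1 - a) * y i) \<le> a * f x + (1 - a) * f y)"

text \<open>Calibration; infima are taken in the extended reals so that inf of the empty set is +infinity.\<close>
definition calibrated ::
  "real ^ 'k ^ 'n \<Rightarrow> (nat \<Rightarrow> real) set \<Rightarrow> ((nat \<Rightarrow> real) \<Rightarrow> real ^ 'n) \<Rightarrow> bool" where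
  "calibrated L C psi = (\<exists>pred :: (nat \<Rightarrow> real) \<Rightarrow> 'k. \<forall>q\<in>prob_simplex.
      (INF u\<in>{u\<in>C. pred u \<notin> loss_argmin L q}. ereal (q \<bullet> psi u))
        > (INF u\<in>C. ereal (q \<bullet> psi u)))"

definition convex_calibrated_in_dim :: "real ^ 'k ^ 'n \<Rightarrow> nat \<Rightarrow> bool" where
  "convex_calibrated_in_dim L d = (\<exists>C psi. C \<subseteq> Rd d \<and> convex_fset C \<and>
      (\<forall>u\<in>C. \<forall>i. 0 \<le> psi u $ i) \<and> (\<forall>i. convex_fon C (\<lambda>u. psi u $ i)) \<and>
      calibrated L C psi)"

definition CCdim :: "real ^ 'k ^ 'n \<Rightarrow> enat" where
  "CCdim L = (if \<exists>d. convex_calibrated_in_dim L d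
              then enat (LEAST d. convex_calibrated_in_dim L d) else \<infinity>)"

end

theory Submission
  imports Defs "HOL-Library.Infinite_Set"
begin


lemma convex_comb_fin:
  fixes C :: "(nat\<Rightarrow>real) set" and f and S :: "'a set" and \<mu> and x :: "'a \<Rightarrow> nat \<Rightarrow> real"
  assumes cC: "convex_fset C" and cf: "convex_fon C f" and fin: "finite S" and ne: "S \<noteq> {}"
    and nn: "\<forall>j\<in>S. 0 \<le> \<mu> j" and s1: "sum \<mu> S = 1" and xC: "\<forall>j\<in>S. x j \<in> C"
  shows "(\<lambda>i. \<Sum>j\<in>S. \<mu> j * x j i) \<in> C \<and> f (\<lambda>i. \<Sum>j\<in>S. \<mu> j * x j i) \<le> (\<Sum>j\<in>S. \<mu> j * f (x j))"
  using fin ne nn s1 xC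
proof (induction S arbitrary: \<mu> rule: finite_ne_induct)
  case (singleton a)
  then show ?case by simp
next
  case (insert a S)
  define s where "s = 1 - \<mu> a"
  have sS: "sum \<mu> S = s" using insert by (simp add: s_def)
  have sge: "0 \<le> s" using sS insert sum_nonneg[of S \<mu>] by simp
  show ?case
  proof (cases "s = 0")
    case True
    have z: "\<forall>j\<in>S. \<mu> j = 0" using sS True insert sum_nonneg_eq_0_iff[of S \<mu>] by auto
    have ma: "\<mu> a = 1" using True s_def by simp
    have e: "(\<lambda>i. \<Sum>j\<in>insert a S. \<mu> j * x j i) = x a"
      using insert z ma by (auto simp: fun_eq_iff)
    have e2: "(\<Sum>j\<in>insert a S. \<mu> j * f (x j)) = f (x a)" using insert z ma by simp
    show ?thesis using e e2 insert by simp
  next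
    case False
    then have spos: "0 < s" using sge by simp
    define \<nu> where "\<nu> j = \<mu> j / s" for j
    have IH: "(\<lambda>i. \<Sum>j\<in>S. \<nu> j * x j i) \<in> C \<and> f (\<lambda>i. \<Sum>j\<in>S. \<nu> j * x j i) \<le> (\<Sum>j\<in>S. \<nu> j * f (x j))"
      apply (rule insert.IH)
      using insert spos sS by (auto simp: \<nu>_def sum_divide_distrib[symmetric])
    define z where "z = (\<lambda>i. \<Sum>j\<in>S. \<nu> j * x j i)"
    have am: "0 \<le> \<mu> a" "\<mu> a \<le> 1" using insert sge s_def by auto
    have eq: "(\<lambda>i. \<Sum>j\<in>insert a S. \<mu> j * x j i) = (\<lambda>i. \<mu> a * x a i + (1 - \<mu> a) * z i)"
    proof
      fix i
      have "(1 - \<mu> a) * z i = (\<Sum>j\<in>S. \<mu> j * x j i)"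
        using spos by (simp add: z_def s_def[symmetric] \<nu>_def sum_distrib_left)
      then show "(\<Sum>j\<in>insert a S. \<mu> j * x j i) = \<mu> a * x a i + (1 - \<mu> a) * z i"
        using insert by simp
    qed
    have zC: "z \<in> C" using IH z_def by simp
    have mem: "(\<lambda>i. \<mu> a * x a i + (1 - \<mu> a) * z i) \<in> C"
      using cC zC insert am unfolding convex_fset_def by auto
    have "f (\<lambda>i. \<mu> a * x a i + (1 - \<mu> a) * z i) \<le> \<mu> a * f (x a) + (1 - \<mu> a) * f z"
      using cf zC insert am unfolding convex_fon_def by auto
    also have "(1 - \<mu> a) * f z \<le> (1 - \<mu> a) * (\<Sum>j\<in>S. \<nu> j * f (x j))"
      using IH z_def am by (intro mult_left_mono) auto
    also have "(1 - \<mu> a) * (\<Sum>j\<in>S. \<nu> j * f (x j)) = (\<Sum>j\<in>S. \<mu> j * f (x j))"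
      using spos by (simp add: s_def[symmetric] \<nu>_def sum_distrib_left)
    finally show ?thesis using eq mem insert by simp
  qed
qed



lemma hull_image_comb:
  fixes G :: "'a \<Rightarrow> 'b::real_vector"
  assumes fin: "finite S" and z: "z \<in> convex hull (G ` S)"
  shows "\<exists>\<mu>. (\<forall>J\<in>S. 0 \<le> \<mu> J) \<and> sum \<mu> S = 1 \<and> z = (\<Sum>J\<in>S. \<mu> J *\<^sub>R G J)"
proof -
  have fi: "finite (G ` S)" using fin by simp
  obtain u where u: "\<forall>x\<in>G ` S. 0 \<le> u x" "sum u (G ` S) = 1" "(\<Sum>x\<in>G ` S. u x *\<^sub>R x) = z"
    using z unfolding convex_hull_finite[OF fi] by blast
  define c where "c v = real (card {J \<in> S. G J = v})" for v
  have cpos: "c v > 0" if "v \<in> G ` S" for v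
  proof -
    have "{J \<in> S. G J = v} \<noteq> {}" using that by auto
    moreover have "finite {J \<in> S. G J = v}" using fin by simp
    ultimately show ?thesis unfolding c_def by (simp add: card_gt_0_iff)
  qed
  define \<mu> where "\<mu> J = u (G J) / c (G J)" for J
  have s1: "sum \<mu> S = (\<Sum>v\<in>G ` S. sum \<mu> {J \<in> S. G J = v})"
    by (rule sum.image_gen[OF fin])
  also have "\<dots> = (\<Sum>v\<in>G ` S. u v)"
  proof (rule sum.cong[OF refl])
    fix v assume v: "v \<in> G ` S"
    have "sum \<mu> {J \<in> S. G J = v} = (\<Sum>J\<in>{J \<in> S. G J = v}. u v / c v)"
      by (rule sum.cong) (auto simp: \<mu>_def)
    also have "\<dots> = c v * (u v / c v)" by (simp add: c_def)
    also have "\<dots> = u v" using cpos[OF v] by simp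
    finally show "sum \<mu> {J \<in> S. G J = v} = u v" .
  qed
  finally have S1: "sum \<mu> S = 1" using u by simp
  have "(\<Sum>J\<in>S. \<mu> J *\<^sub>R G J) = (\<Sum>v\<in>G ` S. (\<Sum>J\<in>{J \<in> S. G J = v}. \<mu> J *\<^sub>R G J))"
    by (rule sum.image_gen[OF fin])
  also have "\<dots> = (\<Sum>v\<in>G ` S. u v *\<^sub>R v)"
  proof (rule sum.cong[OF refl])
    fix v assume v: "v \<in> G ` S"
    have "(\<Sum>J\<in>{J \<in> S. G J = v}. \<mu> J *\<^sub>R G J) = (\<Sum>J\<in>{J \<in> S. G J = v}. (u v / c v) *\<^sub>R v)"
      by (rule sum.cong) (auto simp: \<mu>_def)
    also have "\<dots> = (c v * (u v / c v)) *\<^sub>R v" by (simp add: c_def scaleR_sum_left[symmetric])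
    also have "\<dots> = u v *\<^sub>R v" using cpos[OF v] by simp
    finally show "(\<Sum>J\<in>{J \<in> S. G J = v}. \<mu> J *\<^sub>R G J) = u v *\<^sub>R v" .
  qed
  finally have "z = (\<Sum>J\<in>S. \<mu> J *\<^sub>R G J)" using u by simp
  moreover have "\<forall>J\<in>S. 0 \<le> \<mu> J" using u cpos by (auto simp: \<mu>_def intro!: divide_nonneg_pos)
  ultimately show ?thesis using S1 by blast
qed



lemma core:
  fixes psi :: "(nat \<Rightarrow> real) \<Rightarrow> real^'n" and C :: "(nat\<Rightarrow>real) set" and p :: "real^'n"
    and Y :: "'n set" and \<rho> :: "'n \<Rightarrow> nat" and d :: nat and F :: "(nat\<Rightarrow>real) set" and \<epsilon> :: real
  assumes cC: "convex_fset C" and cpsi: "\<forall>i. convex_fon C (\<lambda>u. psi u $ i)"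
    and psinn: "\<forall>u\<in>C. \<forall>i. 0 \<le> psi u $ i"
    and CRd: "C \<subseteq> Rd d"
    and Yp: "\<forall>y\<in>Y. 0 < p$y" and Yne: "Y \<noteq> {}"
    and \<rho>d: "\<forall>i<d. \<exists>j. \<rho> j = i"
    and Ffin: "finite F" and Fne: "F \<noteq> {}" and FC: "F \<subseteq> C" and eps: "0 < \<epsilon>"
  shows "\<exists>u\<in>C. \<exists>g :: 'n \<Rightarrow> real^'n. \<forall>q. (\<forall>y. 0 \<le> q$y) \<longrightarrow> (\<forall>y. y \<notin> Y \<longrightarrow> q$y = 0) \<longrightarrow>
      (\<forall>j. \<rho> j < d \<longrightarrow> (\<Sum>y\<in>Y. (q$y - p$y) / p$y * g y $ j) = 0) \<longrightarrow>
      (\<forall>a\<in>F. q \<bullet> psi u \<le> q \<bullet> psi a + 2*\<epsilon>*(\<Sum>y\<in>Y. q$y / p$y))"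
proof -
  have pnz: "\<And>y. y \<in> Y \<Longrightarrow> p$y \<noteq> 0" using Yp by force
  define E where "E u = (\<chi> j. if \<rho> j < d then u (\<rho> j) else 0)" for u :: "nat\<Rightarrow>real"
  obtain y0 where y0: "y0 \<in> Y" using Yne by blast
  define Js where "Js = PiE Y (\<lambda>_. F)"
  have finY: "finite Y" by simp
  have finJs: "finite Js" unfolding Js_def using Ffin by (simp add: finite_PiE)
  define G where "G J = ((\<chi> y. if y \<in> Y then E (J y) - E (J y0) else 0),
      (\<Sum>y\<in>Y. p$y * psi (J y) $ y))" for J :: "'n \<Rightarrow> nat \<Rightarrow> real"
  define H where "H = convex hull (G ` Js)"
  define T where "T = {t. (0, t) \<in> H}"
  obtain a0 where a0: "a0 \<in> F" using Fne by blast
  define Jc where "Jc = (\<lambda>y\<in>Y. a0)"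
  have JcJs: "Jc \<in> Js" unfolding Js_def Jc_def using a0 by auto
  have "(\<chi> y. if y \<in> Y then E (Jc y) - E (Jc y0) else 0) = (0::real^'n^'n)"
    unfolding vec_eq_iff by (simp add: Jc_def y0)
  then have "fst (G Jc) = 0" unfolding G_def by simp
  then have GJc: "(0, snd (G Jc)) = G Jc" by (simp add: prod_eq_iff)
  have "G Jc \<in> H" unfolding H_def using JcJs by (simp add: hull_inc)
  then have "(0, snd (G Jc)) \<in> H" by (simp only: GJc)
  then have TJc: "snd (G Jc) \<in> T" unfolding T_def by simp
  then have Tne: "T \<noteq> {}" by blast
  have Hnn: "0 \<le> snd z" if zH: "z \<in> H" for z
  proof -
    obtain \<mu> where \<mu>: "\<forall>J\<in>Js. 0 \<le> \<mu> J" "sum \<mu> Js = 1" "z = (\<Sum>J\<in>Js. \<mu> J *\<^sub>R G J)"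
      using hull_image_comb[OF finJs zH[unfolded H_def]] by blast
    have "snd z = (\<Sum>J\<in>Js. \<mu> J * snd (G J))" using \<mu>(3) by (simp add: snd_sum)
    also have "\<dots> \<ge> 0"
    proof (rule sum_nonneg)
      fix J assume J: "J \<in> Js"
      then have "\<forall>y\<in>Y. J y \<in> C" unfolding Js_def using FC by auto
      then have "0 \<le> snd (G J)" unfolding G_def snd_conv
      proof (intro sum_nonneg)
        fix y assume JC: "\<forall>y\<in>Y. J y \<in> C" and y: "y \<in> Y"
        have "0 \<le> p$y" using Yp y by (simp add: less_imp_le)
        moreover have "0 \<le> psi (J y) $ y" using psinn JC y by blast
        ultimately show "0 \<le> p$y * psi (J y) $ y" by simp
      qed
      then show "0 \<le> \<mu> J * snd (G J)" using \<mu>(1) J by simp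
    qed
    finally show ?thesis .
  qed
  have bddT: "bdd_below T" unfolding T_def using Hnn by (intro bdd_belowI[of _ 0]) force
  define m where "m = Inf T"
  have mle: "m \<le> t" if "t \<in> T" for t unfolding m_def using cInf_lower[OF that bddT] .
  have notin: "(0, m - \<epsilon>) \<notin> H"
  proof
    assume "(0, m - \<epsilon>) \<in> H"
    then have "m - \<epsilon> \<in> T" unfolding T_def by simp
    then show False using mle eps by fastforce
  qed
  obtain ts where ts: "ts \<in> T" "ts < m + \<epsilon>"
    using cInf_less_iff[OF Tne bddT, of "m + \<epsilon>"] eps unfolding m_def by auto
  have tsH: "(0, ts) \<in> H" using ts T_def by simp
  have clH: "closed H" unfolding H_def using finJs
    by (simp add: compact_imp_closed finite_imp_compact_convex_hull)
  have cvH: "convex H" unfolding H_def by simp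
  obtain a b where ab: "inner a (0, m - \<epsilon>) < b" "\<forall>x\<in>H. b < inner a x"
    using separating_hyperplane_closed_point[OF cvH clH notin] by blast
  obtain A \<alpha> where a: "a = (A, \<alpha>)" by (cases a)
  have b1: "\<alpha> * (m - \<epsilon>) < b" using ab(1) a by simp
  have b2: "b < \<alpha> * ts" using ab(2) tsH a by force
  have apos: "0 < \<alpha>"
  proof (rule ccontr)
    assume "\<not> 0 < \<alpha>"
    then have "\<alpha> * ts \<le> \<alpha> * (m - \<epsilon>)" using mle[OF ts(1)] eps
      by (intro mult_left_mono_neg) auto
    then show False using b1 b2 by simp
  qed
  have key0: "m - \<epsilon> < (A \<bullet> fst (G J)) / \<alpha> + snd (G J)" if "J \<in> Js" for J
  proof -
    have "G J \<in> H" unfolding H_def using that by (simp add: hull_inc)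
    then have "b < A \<bullet> fst (G J) + \<alpha> * snd (G J)" using ab(2) a
      by (metis inner_Pair inner_real_def prod.collapse)
    then have "\<alpha> * (m - \<epsilon>) < A \<bullet> fst (G J) + \<alpha> * snd (G J)" using b1 by simp
    then have "m - \<epsilon> < (A \<bullet> fst (G J) + \<alpha> * snd (G J)) / \<alpha>" using apos
      by (simp add: pos_less_divide_eq mult.commute)
    then show ?thesis using apos by (simp add: add_divide_distrib)
  qed
  define gg where "gg y = (1/\<alpha>) *\<^sub>R A$y - (if y = y0 then (1/\<alpha>) *\<^sub>R (\<Sum>y'\<in>Y. A$y') else 0)" for y
  have sumgg: "(\<Sum>y\<in>Y. gg y) = 0"
    unfolding gg_def using y0 by (simp add: sum_subtractf scaleR_sum_right[symmetric] sum.delta)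
  have claim1: "(\<Sum>y\<in>Y. gg y \<bullet> E (J y)) = (A \<bullet> fst (G J)) / \<alpha>" for J
  proof -
    have "A \<bullet> fst (G J) = (\<Sum>y\<in>UNIV. A$y \<bullet> (if y \<in> Y then E (J y) - E (J y0) else 0))"
      unfolding G_def by (simp add: inner_vec_def)
    also have "\<dots> = (\<Sum>y\<in>Y. A$y \<bullet> (E (J y) - E (J y0)))"
      by (simp add: if_distrib sum.If_cases Int_absorb1)
    also have "\<dots> = (\<Sum>y\<in>Y. A$y \<bullet> E (J y)) - (\<Sum>y\<in>Y. A$y) \<bullet> E (J y0)"
      by (simp add: inner_diff_right sum_subtractf inner_sum_left)
    finally have 1: "A \<bullet> fst (G J) = (\<Sum>y\<in>Y. A$y \<bullet> E (J y)) - (\<Sum>y\<in>Y. A$y) \<bullet> E (J y0)" .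
    have "(\<Sum>y\<in>Y. gg y \<bullet> E (J y)) = (\<Sum>y\<in>Y. (1/\<alpha>) * (A$y \<bullet> E (J y))
        - (if y = y0 then (1/\<alpha>) * ((\<Sum>y'\<in>Y. A$y') \<bullet> E (J y)) else 0))"
      unfolding gg_def by (intro sum.cong) (auto simp: inner_diff_left)
    also have "\<dots> = (1/\<alpha>) * (\<Sum>y\<in>Y. A$y \<bullet> E (J y)) - (1/\<alpha>) * ((\<Sum>y'\<in>Y. A$y') \<bullet> E (J y0))"
      using y0 by (simp add: sum_subtractf sum_distrib_left sum.delta)
    finally show ?thesis using 1 by (simp add: diff_divide_distrib)
  qed
  define val where "val y a = gg y \<bullet> E a + p$y * psi a $ y" for y a
  have key: "m - \<epsilon> < (\<Sum>y\<in>Y. val y (J y))" if "J \<in> Js" for J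
  proof -
    have "(\<Sum>y\<in>Y. val y (J y)) = (\<Sum>y\<in>Y. gg y \<bullet> E (J y)) + snd (G J)"
      unfolding val_def G_def by (simp add: sum.distrib)
    then show ?thesis using key0[OF that] claim1 by simp
  qed
  define my where "my y = Min (val y ` F)" for y
  have myle: "my y \<le> val y a" if "a \<in> F" for y a
    unfolding my_def using Ffin that by simp
  have "\<forall>y. \<exists>a. a \<in> F \<and> val y a = my y"
  proof
    fix y
    have "my y \<in> val y ` F" unfolding my_def using Ffin Fne by (intro Min_in) auto
    then show "\<exists>a. a \<in> F \<and> val y a = my y" by auto
  qed
  then obtain amin where amin: "\<And>y. amin y \<in> F" "\<And>y. val y (amin y) = my y" by metis
  define J0 where "J0 = (\<lambda>y\<in>Y. amin y)"
  have "J0 \<in> Js" unfolding J0_def Js_def using amin by auto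
  from key[OF this] have summy: "m - \<epsilon> < (\<Sum>y\<in>Y. my y)"
    unfolding J0_def using amin by simp
  obtain \<mu> where \<mu>: "\<forall>J\<in>Js. 0 \<le> \<mu> J" "sum \<mu> Js = 1" "(0, ts) = (\<Sum>J\<in>Js. \<mu> J *\<^sub>R G J)"
    using hull_image_comb[OF finJs tsH[unfolded H_def]] by blast
  have fst0: "(\<Sum>J\<in>Js. \<mu> J *\<^sub>R fst (G J)) = 0"
    using arg_cong[OF \<mu>(3), of fst] by (simp add: fst_sum)
  have sndts: "(\<Sum>J\<in>Js. \<mu> J * snd (G J)) = ts"
    using arg_cong[OF \<mu>(3), of snd] by (simp add: snd_sum)
  define E0 where "E0 = (\<Sum>J\<in>Js. \<mu> J *\<^sub>R E (J y0))"
  have EY: "(\<Sum>J\<in>Js. \<mu> J *\<^sub>R E (J y)) = E0" if "y \<in> Y" for y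
  proof -
    have "(\<Sum>J\<in>Js. \<mu> J *\<^sub>R fst (G J)) $ y = 0" using fst0 by simp
    then have "(\<Sum>J\<in>Js. \<mu> J *\<^sub>R (E (J y) - E (J y0))) = 0"
      unfolding G_def using that by simp
    then show ?thesis unfolding E0_def by (simp add: scaleR_diff_right sum_subtractf)
  qed
  define B where "B y = (\<Sum>J\<in>Js. \<mu> J * val y (J y))" for y
  have Bge: "my y \<le> B y" if "y \<in> Y" for y
  proof -
    have "(\<Sum>J\<in>Js. \<mu> J * my y) \<le> B y" unfolding B_def
    proof (rule sum_mono)
      fix J assume J: "J \<in> Js"
      then have "J y \<in> F" unfolding Js_def using that by auto
      then show "\<mu> J * my y \<le> \<mu> J * val y (J y)" using myle \<mu>(1) J by (simp add: mult_left_mono)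
    qed
    then show ?thesis using \<mu>(2) by (simp add: sum_distrib_right[symmetric])
  qed
  have sumB: "(\<Sum>y\<in>Y. B y) = ts"
  proof -
    have "(\<Sum>y\<in>Y. B y) = (\<Sum>y\<in>Y. \<Sum>J\<in>Js. \<mu> J * val y (J y))"
      unfolding B_def by simp
    also have "\<dots> = (\<Sum>J\<in>Js. \<Sum>y\<in>Y. \<mu> J * val y (J y))"
      by (rule sum.swap)
    also have "\<dots> = (\<Sum>J\<in>Js. \<mu> J * (\<Sum>y\<in>Y. val y (J y)))"
      by (simp add: sum_distrib_left)
    also have "\<dots> = (\<Sum>J\<in>Js. \<mu> J * ((A \<bullet> fst (G J)) / \<alpha>)) + (\<Sum>J\<in>Js. \<mu> J * snd (G J))"
      unfolding val_def G_def using claim1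
      by (simp add: sum.distrib distrib_left G_def)
    also have "(\<Sum>J\<in>Js. \<mu> J * ((A \<bullet> fst (G J)) / \<alpha>)) = (A \<bullet> (\<Sum>J\<in>Js. \<mu> J *\<^sub>R fst (G J))) / \<alpha>"
      by (simp add: inner_sum_right sum_divide_distrib)
    finally show ?thesis using fst0 sndts by simp
  qed
  have Ble: "B y \<le> my y + 2 * \<epsilon>" if "y \<in> Y" for y
  proof -
    have "B y - my y \<le> (\<Sum>y\<in>Y. B y - my y)"
      using that Bge by (intro member_le_sum) auto
    also have "\<dots> = ts - (\<Sum>y\<in>Y. my y)" using sumB by (simp add: sum_subtractf)
    finally show ?thesis using ts(2) summy by simp
  qed
  have JsC: "J y \<in> C" if "J \<in> Js" "y \<in> Y" for J y
    using that FC unfolding Js_def by auto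
  have Jsne: "Js \<noteq> {}" using JcJs by blast
  define u where "u = (\<lambda>i. \<Sum>J\<in>Js. \<mu> J * (J y0) i)"
  have uy: "(\<lambda>i. \<Sum>J\<in>Js. \<mu> J * (J y) i) = u" if "y \<in> Y" for y
  proof
    fix i
    show "(\<Sum>J\<in>Js. \<mu> J * (J y) i) = u i"
    proof (cases "i < d")
      case True
      then obtain j where j: "\<rho> j = i" using \<rho>d by blast
      have "(\<Sum>J\<in>Js. \<mu> J *\<^sub>R E (J y)) $ j = E0 $ j" using EY[OF that] by simp
      then show ?thesis unfolding E0_def u_def E_def using j True by simp
    next
      case False
      have z0: "(J y) i = 0" if "J \<in> Js" "y \<in> Y" for J y
        using CRd JsC[OF that] False unfolding Rd_def by auto
      have "(\<Sum>J\<in>Js. \<mu> J * (J y) i) = 0" by (rule sum.neutral) (use z0 \<open>y \<in> Y\<close> in auto)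
      moreover have "(\<Sum>J\<in>Js. \<mu> J * (J y0) i) = 0" by (rule sum.neutral) (use z0 y0 in auto)
      ultimately show ?thesis unfolding u_def by simp
    qed
  qed
  have uC: "u \<in> C"
    using convex_comb_fin[OF cC cpsi[rule_format, of y0] finJs Jsne, of \<mu> "\<lambda>J. J y0"] \<mu> JsC y0
    unfolding u_def by auto
  have jensen: "psi u $ y \<le> (\<Sum>J\<in>Js. \<mu> J * psi (J y) $ y)" if "y \<in> Y" for y
    using convex_comb_fin[OF cC cpsi[rule_format, of y] finJs Jsne, of \<mu> "\<lambda>J. J y"] \<mu> JsC that uy[OF that]
    by auto
  have Esupp: "E v $ j = 0" if "\<not> \<rho> j < d" for v j unfolding E_def using that by simp
  have E0supp: "E0 $ j = 0" if "\<not> \<rho> j < d" for j unfolding E0_def using Esupp that by simp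
  show ?thesis
  proof (intro bexI[OF _ uC] exI[of _ gg] allI impI ballI)
    fix q :: "real^'n" and a
    assume qnn: "\<forall>y. 0 \<le> q$y" and qY: "\<forall>y. y \<notin> Y \<longrightarrow> q$y = 0"
      and qc: "\<forall>j. \<rho> j < d \<longrightarrow> (\<Sum>y\<in>Y. (q$y - p$y) / p$y * gg y $ j) = 0" and aF: "a \<in> F"
    define Gq where "Gq = (\<Sum>y\<in>Y. (q$y / p$y) *\<^sub>R gg y)"
    have Gq0: "Gq \<bullet> v = 0" if vs: "\<forall>j. \<not> \<rho> j < d \<longrightarrow> v $ j = 0" for v
    proof -
      have "Gq $ j * v $ j = 0" for j
      proof (cases "\<rho> j < d")
        case True
        have "Gq $ j = (\<Sum>y\<in>Y. (q$y / p$y) * gg y $ j)" unfolding Gq_def by simp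
        also have "\<dots> = (\<Sum>y\<in>Y. (q$y - p$y) / p$y * gg y $ j + gg y $ j)"
        proof (rule sum.cong[OF refl])
          fix y assume "y \<in> Y"
          then have "p$y \<noteq> 0" using Yp by force
          then show "(q$y / p$y) * gg y $ j = (q$y - p$y) / p$y * gg y $ j + gg y $ j"
            by (simp add: field_simps)
        qed
        also have "\<dots> = (\<Sum>y\<in>Y. (q$y - p$y) / p$y * gg y $ j) + (\<Sum>y\<in>Y. gg y) $ j"
          by (simp add: sum.distrib)
        finally have "Gq $ j = (\<Sum>y\<in>Y. (q$y - p$y) / p$y * gg y $ j) + (\<Sum>y\<in>Y. gg y) $ j" .
        then show ?thesis using qc True sumgg by simp
      next
        case False then show ?thesis using vs by simp
      qed
      then show ?thesis unfolding inner_vec_def inner_real_def by (intro sum.neutral) auto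
    qed
    have innY: "q \<bullet> v = (\<Sum>y\<in>Y. q$y * v$y)" for v :: "real^'n"
      unfolding inner_vec_def inner_real_def using qY
      by (intro sum.mono_neutral_right) auto
    have step1: "q \<bullet> psi u \<le> (\<Sum>y\<in>Y. q$y * (\<Sum>J\<in>Js. \<mu> J * psi (J y) $ y))"
      unfolding innY using jensen qnn by (intro sum_mono mult_left_mono) auto
    have peq: "q$y * (\<Sum>J\<in>Js. \<mu> J * psi (J y) $ y) = (q$y / p$y) * (B y - gg y \<bullet> E0)"
      if y: "y \<in> Y" for y
    proof -
      have "B y = gg y \<bullet> (\<Sum>J\<in>Js. \<mu> J *\<^sub>R E (J y)) + p$y * (\<Sum>J\<in>Js. \<mu> J * psi (J y) $ y)"
        unfolding B_def val_def
        by (simp add: distrib_left sum.distrib inner_sum_right sum_distrib_left algebra_simps)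
      then have "B y - gg y \<bullet> E0 = p$y * (\<Sum>J\<in>Js. \<mu> J * psi (J y) $ y)" using EY[OF y] by simp
      moreover have "p$y \<noteq> 0" using Yp y by force
      ultimately show ?thesis by simp
    qed
    have "(\<Sum>y\<in>Y. q$y * (\<Sum>J\<in>Js. \<mu> J * psi (J y) $ y)) = (\<Sum>y\<in>Y. (q$y / p$y) * B y) - Gq \<bullet> E0"
      using peq unfolding Gq_def
      by (simp add: sum_subtractf right_diff_distrib inner_sum_left)
    also have "Gq \<bullet> E0 = 0" using Gq0 E0supp by blast
    also have "(\<Sum>y\<in>Y. (q$y / p$y) * B y) \<le> (\<Sum>y\<in>Y. (q$y / p$y) * (val y a + 2*\<epsilon>))"
    proof (rule sum_mono)
      fix y assume y: "y \<in> Y"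
      have "B y \<le> val y a + 2*\<epsilon>" using Ble[OF y] myle[OF aF, of y] by simp
      then show "(q$y / p$y) * B y \<le> (q$y / p$y) * (val y a + 2*\<epsilon>)"
        using qnn Yp y by (intro mult_left_mono) (auto intro: divide_nonneg_pos)
    qed
    also have "(\<Sum>y\<in>Y. (q$y / p$y) * (val y a + 2*\<epsilon>))
        = Gq \<bullet> E a + (\<Sum>y\<in>Y. q$y * psi a $ y) + 2*\<epsilon>*(\<Sum>y\<in>Y. q$y / p$y)"
      unfolding val_def Gq_def using pnz
      by (simp add: distrib_left sum.distrib inner_sum_left sum_distrib_left mult.commute mult.left_commute)
    also have "Gq \<bullet> E a = 0" using Gq0 Esupp by blast
    finally show "q \<bullet> psi u \<le> q \<bullet> psi a + 2*\<epsilon>*(\<Sum>y\<in>Y. q$y / p$y)"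
      using step1 innY by simp
  qed
qed



definition orthS :: "(real^'n) set \<Rightarrow> (real^'n) set" where
  "orthS B = {w. \<forall>b\<in>B. b \<bullet> w = 0}"

lemma subspace_orthS: "subspace (orthS B)"
  unfolding subspace_def orthS_def by (auto simp: inner_add_right)

lemma dim_orthS_span:
  fixes B :: "(real^'n) set"
  shows "dim (orthS B) + dim B = CARD('n)"
proof -
  have "orthS B = {y \<in> UNIV. \<forall>x \<in> span B. orthogonal x y}"
  proof (auto simp: orthS_def orthogonal_def)
    fix w x assume h: "\<forall>b\<in>B. b \<bullet> w = 0" and x: "x \<in> span B"
    have "orthogonal w x" using orthogonal_to_span[OF x, of w] h
      by (simp add: orthogonal_def inner_commute)
    then show "x \<bullet> w = 0" by (simp add: orthogonal_def inner_commute)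
  next
    fix w b assume h: "\<forall>x\<in>span B. x \<bullet> w = 0" and b: "b \<in> B"
    then show "b \<bullet> w = 0" using span_base[OF b] by blast
  qed
  moreover have "dim {y \<in> UNIV. \<forall>x \<in> span B. orthogonal x y} + dim (span B) = dim (UNIV::(real^'n) set)"
    by (rule dim_subspace_orthogonal_to_vectors) auto
  ultimately show ?thesis by simp
qed

lemma dim_orthS_ge:
  assumes "finite B"
  shows "CARD('n) \<le> dim (orthS (B::(real^'n) set)) + card B"
  using dim_orthS_span[of B] dim_le_card'[OF assms] by simp

lemma dim_meet:
  fixes S T :: "(real^'n) set"
  assumes "subspace S" "subspace T" "CARD('n) < dim S + dim T"
  shows "\<exists>x. x \<in> S \<and> x \<in> T \<and> norm x = 1"
proof -
  have e: "dim {x + y |x y. x \<in> S \<and> y \<in> T} + dim(S \<inter> T) = dim S + dim T"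
    using dim_sums_Int[OF assms(1,2)] .
  have "dim {x + y |x y. x \<in> S \<and> y \<in> T} \<le> CARD('n)" by (rule dim_subset_UNIV_cart)
  then have "dim (S \<inter> T) \<noteq> 0" using e assms(3) by linarith
  then obtain x where x: "x \<in> S \<inter> T" "x \<noteq> 0" by auto
  have "x /\<^sub>R norm x \<in> S" "x /\<^sub>R norm x \<in> T"
    using x assms(1,2) by (auto intro: subspace_scale)
  moreover have "norm (x /\<^sub>R norm x) = 1" using x by simp
  ultimately show ?thesis by blast
qed



lemma inner_supp:
  fixes a x :: "real^'n"
  assumes "\<forall>y. y \<notin> Y \<longrightarrow> a$y = 0"
  shows "a \<bullet> x = (\<Sum>y\<in>Y. a$y * x$y)"
  unfolding inner_vec_def inner_real_def using assms
  by (intro sum.mono_neutral_right) auto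

lemma abs_inner_bound:
  fixes a x :: "real^'n"
  assumes "\<forall>y. y \<notin> Y \<longrightarrow> a$y = 0" "\<forall>y. 0 \<le> x$y"
  shows "\<bar>a \<bullet> x\<bar> \<le> norm a * (\<Sum>y\<in>Y. x$y)"
proof -
  have "\<bar>a \<bullet> x\<bar> = \<bar>\<Sum>y\<in>Y. a$y * x$y\<bar>" using inner_supp[OF assms(1)] by simp
  also have "\<dots> \<le> (\<Sum>y\<in>Y. \<bar>a$y * x$y\<bar>)" by (rule sum_abs)
  also have "\<dots> \<le> (\<Sum>y\<in>Y. norm a * x$y)"
  proof (rule sum_mono)
    fix y
    have "\<bar>a$y * x$y\<bar> = \<bar>a$y\<bar> * x$y" using assms(2) by (simp add: abs_mult)
    also have "\<dots> \<le> norm a * x$y" using assms(2) component_le_norm_cart[of a y]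
      by (intro mult_right_mono) auto
    finally show "\<bar>a$y * x$y\<bar> \<le> norm a * x$y" .
  qed
  also have "\<dots> = norm a * (\<Sum>y\<in>Y. x$y)" by (simp add: sum_distrib_left)
  finally show ?thesis .
qed

lemma inner_lower:
  fixes q x :: "real^'n"
  assumes "\<forall>y\<in>Y. c \<le> q$y" "\<forall>y. 0 \<le> q$y" "\<forall>y. 0 \<le> x$y"
  shows "c * (\<Sum>y\<in>Y. x$y) \<le> q \<bullet> x"
proof -
  have "c * (\<Sum>y\<in>Y. x$y) = (\<Sum>y\<in>Y. c * x$y)" by (simp add: sum_distrib_left)
  also have "\<dots> \<le> (\<Sum>y\<in>Y. q$y * x$y)"
    using assms by (intro sum_mono mult_right_mono) auto
  also have "\<dots> \<le> (\<Sum>y\<in>UNIV. q$y * x$y)"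
    using assms by (intro sum_mono2) auto
  also have "\<dots> = q \<bullet> x" by (simp add: inner_vec_def)
  finally show ?thesis .
qed

lemma inner_upper:
  fixes q x :: "real^'n"
  assumes "\<forall>y. y \<notin> Y \<longrightarrow> q$y = 0" "\<forall>y\<in>Y. q$y \<le> b" "\<forall>y. 0 \<le> x$y"
  shows "q \<bullet> x \<le> b * (\<Sum>y\<in>Y. x$y)"
proof -
  have "q \<bullet> x = (\<Sum>y\<in>Y. q$y * x$y)" by (rule inner_supp[OF assms(1)])
  also have "\<dots> \<le> (\<Sum>y\<in>Y. b * x$y)"
    using assms by (intro sum_mono mult_right_mono) auto
  finally show ?thesis by (simp add: sum_distrib_left)
qed

lemma calib_gap:
  fixes psi :: "(nat \<Rightarrow> real) \<Rightarrow> real^'n"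
  assumes cal: "(INF u\<in>{u\<in>C. pred u \<notin> W}. ereal (q \<bullet> psi u)) > (INF u\<in>C. ereal (q \<bullet> psi u))"
  shows "\<exists>v\<in>C. \<exists>\<delta>>0. \<forall>u\<in>C. pred u \<notin> W \<longrightarrow> q \<bullet> psi v + \<delta> \<le> q \<bullet> psi u"
proof -
  obtain r where r: "(INF u\<in>C. ereal (q \<bullet> psi u)) < ereal r"
    "ereal r < (INF u\<in>{u\<in>C. pred u \<notin> W}. ereal (q \<bullet> psi u))"
    using ereal_dense2[OF cal] by blast
  obtain v where v: "v \<in> C" "ereal (q \<bullet> psi v) < ereal r"
    using r(1) by (auto simp: INF_less_iff)
  have w: "r < q \<bullet> psi u" if "u \<in> C" "pred u \<notin> W" for u
  proof -
    have "(INF u\<in>{u\<in>C. pred u \<notin> W}. ereal (q \<bullet> psi u)) \<le> ereal (q \<bullet> psi u)"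
      using that by (intro INF_lower) auto
    then have "ereal r < ereal (q \<bullet> psi u)" using r(2) by (rule order.strict_trans2[rotated])
    then show ?thesis by simp
  qed
  show ?thesis
    using v w by (intro bexI[OF _ v(1)] exI[of _ "r - q \<bullet> psi v"]) force
qed

lemma net:
  fixes psi :: "(nat\<Rightarrow>real) \<Rightarrow> real^'n" and K :: "(real^'n) set"
  assumes Kc: "compact K"
    and Kp: "\<forall>q\<in>K. (\<forall>y. y \<notin> Y \<longrightarrow> q$y = 0) \<and> (\<forall>y\<in>Y. c0 \<le> q$y \<and> q$y \<le> 2)"
    and c0: "0 < c0" and Cne: "C \<noteq> {}" and psinn: "\<forall>u\<in>C. \<forall>i. 0 \<le> psi u $ i" and eta: "0 < \<eta>"
  shows "\<exists>F. finite F \<and> F \<subseteq> C \<and> F \<noteq> {} \<and> (\<forall>q\<in>K. \<exists>a\<in>F. \<forall>v\<in>C. q \<bullet> psi a \<le> q \<bullet> psi v + \<eta>)"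
proof -
  obtain u0 where u0: "u0 \<in> C" using Cne by blast
  define S where "S u = (\<Sum>y\<in>Y. psi u $ y)" for u
  have Snn: "0 \<le> S u" if "u \<in> C" for u unfolding S_def using psinn that by (simp add: sum_nonneg)
  have qnn: "\<forall>y. 0 \<le> q$y" if "q \<in> K" for q
  proof
    fix y show "0 \<le> q$y" using Kp that c0 by (cases "y \<in> Y") force+
  qed
  have lo: "c0 * S u \<le> q \<bullet> psi u" if "q \<in> K" "u \<in> C" for q u
    unfolding S_def using Kp that qnn psinn by (intro inner_lower) auto
  have up: "q \<bullet> psi u \<le> 2 * S u" if "q \<in> K" "u \<in> C" for q u
    unfolding S_def using Kp that psinn by (intro inner_upper) auto
  have diff: "q \<bullet> psi u \<le> q' \<bullet> psi u + norm (q - q') * S u" if "q \<in> K" "q' \<in> K" "u \<in> C" for q q' u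
  proof -
    have "\<bar>(q - q') \<bullet> psi u\<bar> \<le> norm (q - q') * S u"
      unfolding S_def using Kp that psinn by (intro abs_inner_bound) auto
    then show ?thesis by (simp add: inner_diff_left)
  qed
  define B where "B = (2 * S u0 + \<eta>) / c0"
  have nearopt: "\<exists>a\<in>C. \<forall>v\<in>C. q' \<bullet> psi a \<le> q' \<bullet> psi v + \<eta>/3" if q': "q' \<in> K" for q'
  proof -
    define V where "V = (\<lambda>v. q' \<bullet> psi v) ` C"
    have bdd: "bdd_below V" unfolding V_def
      using lo[OF q'] Snn c0 by (intro bdd_belowI[of _ 0]) (force intro: order_trans[OF _ lo[OF q']])
    have Vne: "V \<noteq> {}" using Cne unfolding V_def by simp
    obtain x where x: "x \<in> V" "x < Inf V + \<eta>/3"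
      using cInf_less_iff[OF Vne bdd, of "Inf V + \<eta>/3"] eta by auto
    then obtain a where a: "a \<in> C" "x = q' \<bullet> psi a" unfolding V_def by auto
    have "\<forall>v\<in>C. q' \<bullet> psi a \<le> q' \<bullet> psi v + \<eta>/3"
    proof
      fix v assume "v \<in> C"
      then have "Inf V \<le> q' \<bullet> psi v" unfolding V_def using bdd by (intro cInf_lower) (auto simp: V_def)
      then show "q' \<bullet> psi a \<le> q' \<bullet> psi v + \<eta>/3" using x a by simp
    qed
    then show ?thesis using a by blast
  qed
  then obtain af where af: "\<forall>q'\<in>K. af q' \<in> C \<and> (\<forall>v\<in>C. q' \<bullet> psi (af q') \<le> q' \<bullet> psi v + \<eta>/3)"
    by metis
  have SB: "S (af q') \<le> B" if q': "q' \<in> K" for q'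
  proof -
    have "c0 * S (af q') \<le> q' \<bullet> psi (af q')" using lo q' af by blast
    also have "\<dots> \<le> q' \<bullet> psi u0 + \<eta>/3" using af q' u0 by blast
    also have "\<dots> \<le> 2 * S u0 + \<eta>" using up[OF q' u0] eta by simp
    finally show ?thesis unfolding B_def using c0 by (simp add: pos_le_divide_eq mult.commute)
  qed
  have Bnn: "0 \<le> B" unfolding B_def using Snn[OF u0] eta c0 by simp
  define r where "r = \<eta> / (3 * (B + 2 * B / c0 + 1))"
  have den: "0 < B + 2 * B / c0 + 1" using Bnn c0 by (simp add: add_nonneg_pos)
  have rpos: "0 < r" unfolding r_def using eta den by simp
  have rB: "r * (B + 2 * B / c0) \<le> \<eta>/3"
  proof -
    have "r * (B + 2 * B / c0) \<le> r * (B + 2 * B / c0 + 1)" using rpos by simp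
    also have "\<dots> = \<eta>/3"
    proof -
      have gen: "\<And>X::real. X \<noteq> 0 \<Longrightarrow> \<eta> / (3 * X) * X = \<eta>/3" by simp
      show ?thesis unfolding r_def using gen[of "B + 2 * B / c0 + 1"] den by simp
    qed
    finally show ?thesis .
  qed
  have cover: "K \<subseteq> (\<Union>q'\<in>K. ball q' r)" using rpos by auto
  obtain T where T: "T \<subseteq> K" "finite T" "K \<subseteq> (\<Union>q'\<in>T. ball q' r)"
    using compactE_image[OF Kc _ cover] by blast
  define F where "F = insert u0 (af ` T)"
  have "finite F" "F \<subseteq> C" "F \<noteq> {}" unfolding F_def using T af u0 by auto
  moreover have "\<forall>q\<in>K. \<exists>a\<in>F. \<forall>v\<in>C. q \<bullet> psi a \<le> q \<bullet> psi v + \<eta>"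
  proof
    fix q assume q: "q \<in> K"
    then obtain q' where q': "q' \<in> T" "dist q' q < r" using T by auto
    have q'K: "q' \<in> K" using q' T by auto
    have nq: "norm (q - q') < r" using q' by (simp add: dist_norm norm_minus_commute)
    have nq2: "norm (q' - q) < r" using q' by (simp add: dist_norm)
    define a where "a = af q'"
    have aC: "a \<in> C" using af q'K unfolding a_def by blast
    have SaB: "S a \<le> B" using SB[OF q'K] unfolding a_def .
    have "\<forall>v\<in>C. q \<bullet> psi a \<le> q \<bullet> psi v + \<eta>"
    proof
      fix v assume v: "v \<in> C"
      show "q \<bullet> psi a \<le> q \<bullet> psi v + \<eta>"
      proof (cases "S v \<le> 2 * B / c0")
        case True
        have "q \<bullet> psi a \<le> q' \<bullet> psi a + norm (q - q') * S a" by (rule diff[OF q q'K aC])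
        also have "norm (q - q') * S a \<le> r * B"
          using nq SaB Snn[OF aC] rpos by (intro mult_mono) auto
        also have "q' \<bullet> psi a \<le> q' \<bullet> psi v + \<eta>/3" using af q'K v unfolding a_def by blast
        also have "q' \<bullet> psi v \<le> q \<bullet> psi v + norm (q' - q) * S v" by (rule diff[OF q'K q v])
        also have "norm (q' - q) * S v \<le> r * (2 * B / c0)"
          using nq2 True Snn[OF v] rpos by (intro mult_mono) auto
        finally have "q \<bullet> psi a \<le> q \<bullet> psi v + \<eta>/3 + r * (B + 2 * B / c0)"
          by (simp add: algebra_simps)
        then show ?thesis using rB eta by linarith
      next
        case False
        have "q \<bullet> psi a \<le> 2 * S a" by (rule up[OF q aC])
        also have "\<dots> \<le> 2 * B" using SaB by simp
        also have "2 * B < c0 * S v"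
        proof -
          have "2 * B / c0 < S v" using False by simp
          then show ?thesis using c0 by (simp add: pos_divide_less_eq mult.commute)
        qed
        also have "\<dots> \<le> q \<bullet> psi v" by (rule lo[OF q v])
        finally show ?thesis using eta by simp
      qed
    qed
    moreover have "a \<in> F" unfolding F_def a_def using q' by simp
    ultimately show "\<exists>a\<in>F. \<forall>v\<in>C. q \<bullet> psi a \<le> q \<bullet> psi v + \<eta>" by blast
  qed
  ultimately show ?thesis by blast
qed



lemma argmin_eq:
  assumes "a \<in> loss_argmin L p" "b \<in> loss_argmin L p"
  shows "p \<bullet> column a L = p \<bullet> column b L"
  using assms unfolding loss_argmin_def by (auto intro: order_antisym)

lemma K0_feasible:
  fixes L :: "real^'k^'n" and p w :: "real^'n" and t :: 'k
  assumes pS: "p \<in> prob_simplex" and tA: "t \<in> loss_argmin L p"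
    and w0: "\<forall>y. p$y = 0 \<longrightarrow> w$y = 0" and ws: "(\<Sum>i\<in>UNIV. w$i) = 0"
    and wA: "\<forall>t'. t' \<in> loss_argmin L p \<longrightarrow> w \<bullet> column t L = w \<bullet> column t' L"
  shows "w \<in> feasible_dirs (trigger_set L t) p"
proof -
  have pnn: "\<forall>y. 0 \<le> p$y" and p1: "(\<Sum>i\<in>UNIV. p$i) = 1" using pS unfolding prob_simplex_def by auto
  have ev1: "eventually (\<lambda>e. 0 \<le> (p + e *\<^sub>R w)$y) (at_right 0)" for y
  proof (cases "p$y = 0")
    case True then show ?thesis using w0 by simp
  next
    case False
    then have "0 < p$y" using pnn by (simp add: order_less_le)
    moreover have "((\<lambda>e. p$y + e * w$y) \<longlongrightarrow> p$y + 0 * w$y) (at_right 0)"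
      by (intro tendsto_intros)
    ultimately have "eventually (\<lambda>e. 0 < p$y + e * w$y) (at_right 0)"
      by (intro order_tendstoD(1)) auto
    then show ?thesis by eventually_elim simp
  qed
  have ev2: "eventually (\<lambda>e. (p + e *\<^sub>R w) \<bullet> column t L \<le> (p + e *\<^sub>R w) \<bullet> column t' L) (at_right 0)" for t'
  proof (cases "t' \<in> loss_argmin L p")
    case True
    have "(p + e *\<^sub>R w) \<bullet> column t L = (p + e *\<^sub>R w) \<bullet> column t' L" for e
      using argmin_eq[OF tA True] wA[rule_format, OF True] by (simp add: inner_add_left)
    then show ?thesis by (intro always_eventually) simp
  next
    case False
    then obtain t'' where "p \<bullet> column t' L > p \<bullet> column t'' L" unfolding loss_argmin_def
      by (auto simp: not_le)
    moreover have "p \<bullet> column t L \<le> p \<bullet> column t'' L" using tA unfolding loss_argmin_def by auto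
    ultimately have lt: "0 < p \<bullet> (column t' L - column t L)" by (simp add: inner_diff_right)
    have "((\<lambda>e. (p + e *\<^sub>R w) \<bullet> (column t' L - column t L)) \<longlongrightarrow> (p + 0 *\<^sub>R w) \<bullet> (column t' L - column t L)) (at_right 0)"
      by (intro tendsto_intros)
    then have "eventually (\<lambda>e. 0 < (p + e *\<^sub>R w) \<bullet> (column t' L - column t L)) (at_right 0)"
      using lt by (intro order_tendstoD(1)) auto
    then show ?thesis by eventually_elim (simp add: inner_diff_right)
  qed
  have "eventually (\<lambda>e. (\<forall>y. 0 \<le> (p + e *\<^sub>R w)$y) \<and>
      (\<forall>t'. (p + e *\<^sub>R w) \<bullet> column t L \<le> (p + e *\<^sub>R w) \<bullet> column t' L)) (at_right 0)"
    using eventually_all_finite[of _ "at_right (0::real)", OF ev1]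
      eventually_all_finite[of _ "at_right (0::real)", OF ev2]
    by (rule eventually_conj)
  then obtain b where b: "b > 0" "\<forall>e>0. e < b \<longrightarrow> (\<forall>y. 0 \<le> (p + e *\<^sub>R w)$y) \<and>
      (\<forall>t'. (p + e *\<^sub>R w) \<bullet> column t L \<le> (p + e *\<^sub>R w) \<bullet> column t' L)"
    unfolding eventually_at_right_field by auto
  have sum1: "(\<Sum>i\<in>UNIV. (p + e *\<^sub>R w)$i) = 1" for e
  proof -
    have "(\<Sum>i\<in>UNIV. (p + e *\<^sub>R w)$i) = (\<Sum>i\<in>UNIV. p$i) + e * (\<Sum>i\<in>UNIV. w$i)"
      by (simp add: sum.distrib sum_distrib_left)
    then show ?thesis using p1 ws by simp
  qed
  show ?thesis
  proof -
    have "p + e *\<^sub>R w \<in> trigger_set L t" if e: "0 < e" "e < b" for e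
    proof -
      have "\<forall>y. 0 \<le> (p + e *\<^sub>R w)$y"
        "\<forall>t'. (p + e *\<^sub>R w) \<bullet> column t L \<le> (p + e *\<^sub>R w) \<bullet> column t' L"
        using b(2) e by blast+
      then show ?thesis using sum1[of e]
        unfolding trigger_set_def prob_simplex_def loss_argmin_def by blast
    qed
    then show ?thesis unfolding feasible_dirs_def using b(1) by blast
  qed
qed

lemma lim_const:
  fixes X :: "nat \<Rightarrow> 'a::t2_space" and f :: "'a \<Rightarrow> 'b::t2_space"
  assumes X: "X \<longlonglongrightarrow> l" and c: "\<And>k. f (X k) = c" and cont: "isCont f l"
  shows "f l = c"
proof -
  have "(\<lambda>k. f (X k)) \<longlonglongrightarrow> f l" by (rule isCont_tendsto_compose[OF cont X])
  then have "(\<lambda>k. c) \<longlonglongrightarrow> f l" using c by simp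
  then show ?thesis by (simp add: LIMSEQ_const_iff)
qed



lemma main_contra:
  fixes L :: "real^'k^'n" and p :: "real^'n" and t :: 'k and psi :: "(nat \<Rightarrow> real) \<Rightarrow> real^'n"
    and C :: "(nat\<Rightarrow>real) set" and pred :: "(nat \<Rightarrow> real) \<Rightarrow> 'k" and d :: nat and K0 :: "(real^'n) set"
  assumes pS: "p \<in> prob_simplex" and tA: "t \<in> loss_argmin L p"
    and CRd: "C \<subseteq> Rd d" and cC: "convex_fset C" and psinn: "\<forall>u\<in>C. \<forall>i. 0 \<le> psi u $ i"
    and cpsi: "\<forall>i. convex_fon C (\<lambda>u. psi u $ i)"
    and cal: "\<forall>q\<in>prob_simplex. (INF u\<in>{u\<in>C. pred u \<notin> loss_argmin L q}. ereal (q \<bullet> psi u))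
                > (INF u\<in>C. ereal (q \<bullet> psi u))"
    and K0: "K0 = {w. (\<forall>y. p$y = 0 \<longrightarrow> w$y = 0) \<and> (\<Sum>i\<in>UNIV. w$i) = 0 \<and>
              (\<forall>t'. t' \<in> loss_argmin L p \<longrightarrow> w \<bullet> column t L = w \<bullet> column t' L)}"
    and lt: "dim K0 + d + 1 < card {i. p$i \<noteq> 0}"
  shows False
proof -
  define Y where "Y = {i. p$i \<noteq> 0}"
  have pnn: "\<forall>y. 0 \<le> p$y" and p1: "(\<Sum>i\<in>UNIV. p$i) = 1" using pS unfolding prob_simplex_def by auto
  have Yp: "\<forall>y\<in>Y. 0 < p$y" using pnn unfolding Y_def by (auto simp: order_less_le)
  have YY: "y \<notin> Y \<longleftrightarrow> p$y = 0" for y unfolding Y_def by simp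
  have Yne: "Y \<noteq> {}" using lt unfolding Y_def by (metis card.empty not_less_zero)
  have ple1: "p$y \<le> 1" for y
  proof -
    have "p$y \<le> (\<Sum>i\<in>UNIV. p$i)" using pnn by (intro member_le_sum) auto
    then show ?thesis using p1 by simp
  qed
  define n where "n = CARD('n)"
  have cYn: "card Y \<le> n" unfolding n_def by (rule card_mono) auto
  have cY: "card Y = card {i. p$i \<noteq> 0}" unfolding Y_def ..
  obtain \<rho> :: "'n \<Rightarrow> nat" where \<rho>: "bij_betw \<rho> UNIV {0..<n}"
    using ex_bij_betw_finite_nat[of "UNIV :: 'n set"] unfolding n_def by auto
  have inj\<rho>: "inj \<rho>" using \<rho> by (simp add: bij_betw_def)
  have \<rho>d: "\<forall>i<d. \<exists>j. \<rho> j = i"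
  proof (intro allI impI)
    fix i assume "i < d"
    then have "i \<in> {0..<n}" using lt cYn cY by auto
    then show "\<exists>j. \<rho> j = i" using \<rho> unfolding bij_betw_def by (metis imageE)
  qed
  define pm where "pm = Min (((\<lambda>y. p$y)) ` Y)"
  have pmle: "pm \<le> p$y" if "y \<in> Y" for y unfolding pm_def using that by simp
  have pmpos: "0 < pm"
  proof -
    have "pm \<in> (\<lambda>y. p$y) ` Y" unfolding pm_def using Yne by (intro Min_in) auto
    then show ?thesis using Yp by auto
  qed
  define c0 where "c0 = pm / 2"
  have c0pos: "0 < c0" unfolding c0_def using pmpos by simp
  have c0le: "c0 \<le> 1/2"
  proof -
    obtain y where "y \<in> Y" using Yne by blast
    then show ?thesis unfolding c0_def using pmle[of y] ple1[of y] by simp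
  qed
  define Kset where "Kset = {q :: real^'n. (\<forall>y. y \<notin> Y \<longrightarrow> q$y = 0) \<and> (\<forall>y\<in>Y. c0 \<le> q$y \<and> q$y \<le> 2)}"
  have Kp: "\<forall>q\<in>Kset. (\<forall>y. y \<notin> Y \<longrightarrow> q$y = 0) \<and> (\<forall>y\<in>Y. c0 \<le> q$y \<and> q$y \<le> 2)"
    unfolding Kset_def by blast
  have Kc: "compact Kset"
  unfolding compact_eq_bounded_closed
  proof
    have "norm q \<le> (\<Sum>i\<in>UNIV. \<bar>q$i\<bar>)" for q :: "real^'n" by (rule norm_le_l1_cart)
    moreover have "(\<Sum>i\<in>UNIV. \<bar>q$i\<bar>) \<le> (\<Sum>i\<in>(UNIV::'n set). 2)" if "q \<in> Kset" for q
    proof (rule sum_mono)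
      fix i show "\<bar>q$i\<bar> \<le> 2" using that c0pos unfolding Kset_def by (cases "i \<in> Y") auto
    qed
    ultimately show "bounded Kset" unfolding bounded_iff by (meson order_trans)
  next
    have "Kset = (\<Inter>y\<in>-Y. {q. q$y = 0}) \<inter> (\<Inter>y\<in>Y. {q. c0 \<le> q$y} \<inter> {q. q$y \<le> 2})"
      unfolding Kset_def by auto
    moreover have "closed {q::real^'n. q$y = 0}" for y
    proof -
      have "{q::real^'n. q$y = 0} = {q. q$y \<le> 0} \<inter> {q. q$y \<ge> 0}" by auto
      then show ?thesis using closed_halfspace_component_le_cart[where i=y and a=0]
        closed_halfspace_component_ge_cart[where i=y and a=0] by (simp add: closed_Int)
    qed
    moreover have "closed {q::real^'n. c0 \<le> q$y}" for y
      using closed_halfspace_component_ge_cart[where i=y and a=c0] by simp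
    moreover have "closed {q::real^'n. q$y \<le> 2}" for y
      using closed_halfspace_component_le_cart[where i=y and a=2] by simp
    ultimately show "closed Kset" by (auto intro!: closed_INT closed_Int)
  qed
  have Cne: "C \<noteq> {}"
  proof
    assume "C = {}"
    then show False using cal pS by auto
  qed
  define M where "M = (\<Sum>y\<in>Y. 2 / p$y)"
  have qpM: "(\<Sum>y\<in>Y. q$y / p$y) \<le> M" if "q \<in> Kset" for q
    unfolding M_def
  proof (rule sum_mono)
    fix y assume y: "y \<in> Y"
    then have "q$y \<le> 2" using that Kp by blast
    then show "q$y / p$y \<le> 2 / p$y" using Yp y by (intro divide_right_mono) auto
  qed
  have stage: "\<exists>u g. u \<in> C \<and> (\<forall>q\<in>Kset. (\<forall>j. \<rho> j < d \<longrightarrow> (\<Sum>y\<in>Y. (q$y - p$y) / p$y * g y $ j) = 0) \<longrightarrow>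
      (\<forall>v\<in>C. q \<bullet> psi u \<le> q \<bullet> psi v + (1 + 2*M) / (real k + 1)))" for k :: nat
  proof -
    define \<eta> where "\<eta> = 1 / (real k + 1)"
    have eta: "0 < \<eta>" unfolding \<eta>_def by simp
    obtain F where F: "finite F" "F \<subseteq> C" "F \<noteq> {}"
      "\<forall>q\<in>Kset. \<exists>a\<in>F. \<forall>v\<in>C. q \<bullet> psi a \<le> q \<bullet> psi v + \<eta>"
      using net[OF Kc Kp c0pos Cne psinn eta] by blast
    obtain u g where ug: "u \<in> C" "\<forall>q. (\<forall>y. 0 \<le> q$y) \<longrightarrow> (\<forall>y. y \<notin> Y \<longrightarrow> q$y = 0) \<longrightarrow>
      (\<forall>j. \<rho> j < d \<longrightarrow> (\<Sum>y\<in>Y. (q$y - p$y) / p$y * g y $ j) = 0) \<longrightarrow>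
      (\<forall>a\<in>F. q \<bullet> psi u \<le> q \<bullet> psi a + 2*\<eta>*(\<Sum>y\<in>Y. q$y / p$y))"
      using core[OF cC cpsi psinn CRd Yp Yne \<rho>d F(1) F(3) F(2) eta] by blast
    have "\<forall>q\<in>Kset. (\<forall>j. \<rho> j < d \<longrightarrow> (\<Sum>y\<in>Y. (q$y - p$y) / p$y * g y $ j) = 0) \<longrightarrow>
      (\<forall>v\<in>C. q \<bullet> psi u \<le> q \<bullet> psi v + (1 + 2*M) / (real k + 1))"
    proof (intro ballI impI)
      fix q v assume q: "q \<in> Kset" and qc: "\<forall>j. \<rho> j < d \<longrightarrow> (\<Sum>y\<in>Y. (q$y - p$y) / p$y * g y $ j) = 0"
        and v: "v \<in> C"
      have qnn: "\<forall>y. 0 \<le> q$y"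
      proof
        fix y show "0 \<le> q$y" using q Kp c0pos by (cases "y \<in> Y") force+
      qed
      have qY: "\<forall>y. y \<notin> Y \<longrightarrow> q$y = 0" using q Kp by blast
      obtain a where a: "a \<in> F" "q \<bullet> psi a \<le> q \<bullet> psi v + \<eta>" using F(4) q v by blast
      have "q \<bullet> psi u \<le> q \<bullet> psi a + 2*\<eta>*(\<Sum>y\<in>Y. q$y / p$y)"
        using ug(2) qnn qY qc a(1) by blast
      also have "2*\<eta>*(\<Sum>y\<in>Y. q$y / p$y) \<le> 2*\<eta>*M" using qpM[OF q] eta by simp
      finally have "q \<bullet> psi u \<le> q \<bullet> psi v + (\<eta> + 2*\<eta>*M)" using a(2) by simp
      also have "\<eta> + 2*\<eta>*M = (1 + 2*M) / (real k + 1)" unfolding \<eta>_def by (simp add: field_simps)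
      finally show "q \<bullet> psi u \<le> q \<bullet> psi v + (1 + 2*M) / (real k + 1)" .
    qed
    then show ?thesis using ug(1) by blast
  qed
  define Pr where "Pr k u g \<longleftrightarrow> u \<in> C \<and> (\<forall>q\<in>Kset. (\<forall>j. \<rho> j < d \<longrightarrow> (\<Sum>y\<in>Y. (q$y - p$y) / p$y * g y $ j) = 0) \<longrightarrow>
      (\<forall>v\<in>C. q \<bullet> psi u \<le> q \<bullet> psi v + (1 + 2*M) / (real k + 1)))" for k :: nat and u g
  have "\<forall>k. \<exists>u. \<exists>g. Pr k u g" using stage unfolding Pr_def by blast
  then obtain uu where "\<forall>k. \<exists>g. Pr k (uu k) g" by (rule choice[THEN exE])
  then obtain gg where "\<forall>k. Pr k (uu k) (gg k)" by (rule choice[THEN exE])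
  then have uugg: "\<And>k. uu k \<in> C"
    "\<And>k. \<forall>q\<in>Kset. (\<forall>j. \<rho> j < d \<longrightarrow> (\<Sum>y\<in>Y. (q$y - p$y) / p$y * gg k y $ j) = 0) \<longrightarrow>
      (\<forall>v\<in>C. q \<bullet> psi (uu k) \<le> q \<bullet> psi v + (1 + 2*M) / (real k + 1))"
    unfolding Pr_def by blast+
  define cvec where "cvec k j = (\<chi> y. if y \<in> Y then gg k y $ j / p$y else 0)" for k j
  define Bs where "Bs k = (\<lambda>y. axis y (1::real)) ` (-Y) \<union> {\<chi> i. 1} \<union> (cvec k) ` {j. \<rho> j < d}" for k
  have finBs: "finite (Bs k)" for k unfolding Bs_def by simp
  have cardBs: "card (Bs k) + card Y \<le> n + 1 + d" for k
  proof -
    have c1: "card ((\<lambda>y. axis y (1::real)) ` (-Y)) \<le> card (-Y)" by (rule card_image_le) simp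
    have c2: "card (-Y) + card Y = n"
    proof -
      have "card (-Y \<union> Y) = card (-Y) + card Y" by (rule card_Un_disjoint) auto
      moreover have "-Y \<union> Y = UNIV" by auto
      ultimately show ?thesis unfolding n_def by simp
    qed
    have c3: "card (cvec k ` {j. \<rho> j < d}) \<le> d"
    proof -
      have "card (cvec k ` {j. \<rho> j < d}) \<le> card {j. \<rho> j < d}" by (rule card_image_le) simp
      also have "\<dots> \<le> card {..<d}"
        using inj\<rho> by (intro card_inj_on_le[of \<rho>]) (auto simp: inj_on_def inj_def)
      finally show ?thesis by simp
    qed
    have "card (Bs k) \<le> card ((\<lambda>y. axis y (1::real)) ` (-Y) \<union> {\<chi> i. 1}) + card (cvec k ` {j. \<rho> j < d})"
      unfolding Bs_def by (rule card_Un_le)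
    also have "card ((\<lambda>y. axis y (1::real)) ` (-Y) \<union> {\<chi> i. 1}) \<le> card ((\<lambda>y. axis y (1::real)) ` (-Y)) + card {(\<chi> i. 1)::real^'n}"
      by (rule card_Un_le)
    finally show ?thesis using c1 c2 c3 by simp
  qed
  have Zprop: "(\<forall>y. y \<notin> Y \<longrightarrow> w$y = 0) \<and> (\<Sum>i\<in>UNIV. w$i) = 0 \<and>
      (\<forall>j. \<rho> j < d \<longrightarrow> (\<Sum>y\<in>Y. w$y * (gg k y $ j / p$y)) = 0)" if w: "w \<in> orthS (Bs k)" for w k
  proof (intro conjI allI impI)
    fix y assume "y \<notin> Y"
    then have "axis y (1::real) \<bullet> w = 0" using w unfolding orthS_def Bs_def by auto
    then show "w$y = 0" by (simp add: inner_axis')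
  next
    have "(\<chi> i. 1) \<bullet> w = 0" using w unfolding orthS_def Bs_def by auto
    then show "(\<Sum>i\<in>UNIV. w$i) = 0" by (simp add: inner_vec_def)
  next
    fix j assume j: "\<rho> j < d"
    have "cvec k j \<bullet> w = 0" using w j unfolding orthS_def Bs_def by auto
    moreover have "cvec k j \<bullet> w = (\<Sum>y\<in>Y. cvec k j $ y * w$y)"
      by (rule inner_supp) (simp add: cvec_def)
    ultimately show "(\<Sum>y\<in>Y. w$y * (gg k y $ j / p$y)) = 0"
      by (simp add: cvec_def mult.commute)
  qed
  have exw: "\<exists>w. w \<in> orthS (Bs k) \<and> w \<in> orthS K0 \<and> norm w = 1" for k
  proof -
    have dimZ: "n \<le> dim (orthS (Bs k)) + card (Bs k)" using dim_orthS_ge[OF finBs] unfolding n_def .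
    have dimO: "dim (orthS K0) + dim K0 = n" using dim_orthS_span unfolding n_def .
    have "CARD('n) < dim (orthS (Bs k)) + dim (orthS K0)"
      using dimZ dimO cardBs[of k] lt cY unfolding n_def by linarith
    then show ?thesis using dim_meet[OF subspace_orthS subspace_orthS] by blast
  qed
  then have "\<forall>k. \<exists>w. w \<in> orthS (Bs k) \<and> w \<in> orthS K0 \<and> norm w = 1" by blast
  then obtain ww where ww: "\<forall>k. ww k \<in> orthS (Bs k) \<and> ww k \<in> orthS K0 \<and> norm (ww k) = 1"
    by (rule choice[THEN exE])
  have wwZ: "(\<forall>y. y \<notin> Y \<longrightarrow> ww k $ y = 0) \<and> (\<Sum>i\<in>UNIV. ww k $ i) = 0 \<and>
      (\<forall>j. \<rho> j < d \<longrightarrow> (\<Sum>y\<in>Y. ww k $ y * (gg k y $ j / p$y)) = 0)" for k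
    using Zprop ww by blast
  have Kmem: "p + (\<sigma> * c0) *\<^sub>R w \<in> Kset"
    if w0: "\<forall>y. y \<notin> Y \<longrightarrow> w$y = 0" and wn: "norm w \<le> 1" and s1: "\<bar>\<sigma>\<bar> \<le> 1" for w \<sigma>
  proof -
    have "y \<notin> Y \<longrightarrow> (p + (\<sigma> * c0) *\<^sub>R w)$y = 0" for y using w0 YY by simp
    moreover have "c0 \<le> (p + (\<sigma> * c0) *\<^sub>R w)$y \<and> (p + (\<sigma> * c0) *\<^sub>R w)$y \<le> 2" if y: "y \<in> Y" for y
    proof -
      have wy: "\<bar>w$y\<bar> \<le> 1" using component_le_norm_cart[of w y] wn by simp
      have "\<bar>\<sigma>\<bar> * \<bar>w$y\<bar> \<le> 1" using wy s1 by (intro mult_le_one) auto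
      then have "c0 * (\<bar>\<sigma>\<bar> * \<bar>w$y\<bar>) \<le> c0" using c0pos by (simp add: mult_le_cancel_left1)
      then have ab: "\<bar>\<sigma> * c0 * w$y\<bar> \<le> c0" using c0pos by (simp add: abs_mult mult.commute mult.left_commute)
      have "pm \<le> p$y" using pmle y .
      then show ?thesis using ab ple1[of y] c0le unfolding c0_def by (simp add: abs_le_iff)
    qed
    ultimately show ?thesis unfolding Kset_def by blast
  qed
  have keyk: "\<forall>v\<in>C. (p + (\<sigma>*c0) *\<^sub>R ww k) \<bullet> psi (uu k) \<le> (p + (\<sigma>*c0) *\<^sub>R ww k) \<bullet> psi v + (1 + 2*M) / (real k + 1)"
    if s1: "\<bar>\<sigma>\<bar> \<le> 1" for k \<sigma>
  proof -
    have qK: "p + (\<sigma>*c0) *\<^sub>R ww k \<in> Kset" using Kmem wwZ ww s1 by simp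
    have "(\<Sum>y\<in>Y. ((p + (\<sigma>*c0) *\<^sub>R ww k)$y - p$y) / p$y * gg k y $ j) = 0" if j: "\<rho> j < d" for j
    proof -
      have "(\<Sum>y\<in>Y. ((p + (\<sigma>*c0) *\<^sub>R ww k)$y - p$y) / p$y * gg k y $ j)
          = (\<Sum>y\<in>Y. (\<sigma>*c0) * (ww k $ y * (gg k y $ j / p$y)))"
        by (rule sum.cong) (simp_all add: field_simps)
      also have "\<dots> = (\<sigma>*c0) * (\<Sum>y\<in>Y. ww k $ y * (gg k y $ j / p$y))" by (simp add: sum_distrib_left)
      finally show ?thesis using wwZ j by simp
    qed
    then show ?thesis using uugg(2)[of k] qK by blast
  qed
  define tt where "tt k = pred (uu k)" for k
  have fin_tt: "finite (range tt)" by (rule finite_subset[of _ UNIV]) auto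
  obtain ts where tsinf: "infinite (tt -` {ts})"
    using inf_img_fin_dom[OF fin_tt infinite_UNIV_nat] by blast
  define h0 where "h0 = enumerate (tt -` {ts})"
  have h0mono: "strict_mono h0" unfolding strict_mono_def h0_def using enumerate_mono[OF _ tsinf] by blast
  have tth0: "tt (h0 k) = ts" for k unfolding h0_def using enumerate_in_set[OF tsinf, of k] by simp
  have insph: "(ww \<circ> h0) k \<in> sphere 0 1" for k using ww by simp
  obtain wl r where wl: "wl \<in> sphere 0 1" "strict_mono r" "((ww \<circ> h0) \<circ> r) \<longlonglongrightarrow> wl"
    using compact_imp_seq_compact[OF compact_sphere[of "0::real^'n" 1]] insph
    unfolding seq_compact_def by blast
  define h where "h = h0 \<circ> r"
  have hmono: "strict_mono h" unfolding h_def using h0mono wl(2) by (rule strict_mono_o)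
  have tth: "tt (h k) = ts" for k unfolding h_def using tth0 by simp
  have wlim: "(\<lambda>k. ww (h k)) \<longlonglongrightarrow> wl" using wl(3) unfolding h_def by (simp add: o_def)
  have wln: "norm wl = 1" using wl(1) by simp
  have wlY: "wl$y = 0" if "y \<notin> Y" for y
    using lim_const[OF wlim, of "\<lambda>w. w$y" 0] wwZ that by (simp add: continuous_intros)
  have wls: "(\<Sum>i\<in>UNIV. wl$i) = 0"
    using lim_const[OF wlim, of "\<lambda>w. (\<Sum>i\<in>UNIV. w$i)" 0] wwZ by (simp add: continuous_intros)
  have wlO: "x \<bullet> wl = 0" if "x \<in> K0" for x
    using lim_const[OF wlim, of "\<lambda>w. x \<bullet> w" 0] ww that unfolding orthS_def by (simp add: continuous_intros)
  have Mnn: "0 \<le> M" unfolding M_def using Yp by (intro sum_nonneg) (simp add: less_imp_le)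
  have lim: "ts \<in> loss_argmin L (p + (\<sigma>*c0) *\<^sub>R wl)" if s1: "\<bar>\<sigma>\<bar> = 1" for \<sigma>
  proof (rule ccontr)
    define q where "q = p + (\<sigma>*c0) *\<^sub>R wl"
    assume nq: "ts \<notin> loss_argmin L (p + (\<sigma>*c0) *\<^sub>R wl)"
    have qK: "q \<in> Kset" unfolding q_def using Kmem[of wl \<sigma>] wlY wln s1 by simp
    have qnn: "\<forall>y. 0 \<le> q$y"
    proof
      fix y show "0 \<le> q$y" using qK Kp c0pos by (cases "y \<in> Y") force+
    qed
    have qsum: "(\<Sum>i\<in>UNIV. q$i) = 1"
    proof -
      have "(\<Sum>i\<in>UNIV. q$i) = (\<Sum>i\<in>UNIV. p$i) + (\<sigma>*c0) * (\<Sum>i\<in>UNIV. wl$i)"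
        unfolding q_def by (simp add: sum.distrib sum_distrib_left)
      then show ?thesis using p1 wls by simp
    qed
    have qS: "q \<in> prob_simplex" unfolding prob_simplex_def using qnn qsum by blast
    obtain v \<delta> where v: "v \<in> C" and dpos: "0 < \<delta>"
      and gap: "\<forall>u\<in>C. pred u \<notin> loss_argmin L q \<longrightarrow> q \<bullet> psi v + \<delta> \<le> q \<bullet> psi u"
      using calib_gap[OF cal[rule_format, OF qS]] by blast
    define S where "S u = (\<Sum>y\<in>Y. psi u $ y)" for u
    have Snn: "0 \<le> S u" if "u \<in> C" for u unfolding S_def using psinn that by (simp add: sum_nonneg)
    define R where "R = 1 + 2 * M"
    have Rnn: "0 \<le> R" unfolding R_def using Mnn by simp
    define D where "D = 2 * S v + R + c0 * S v"
    have Dnn: "0 \<le> D" unfolding D_def using Snn[OF v] Rnn c0pos by simp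
    define e where "e k = norm (ww (h k) - wl)" for k
    have bound: "\<delta> \<le> e k * D + R / (real k + 1)" for k
    proof -
      define U where "U = uu (h k)"
      define qk where "qk = p + (\<sigma>*c0) *\<^sub>R ww (h k)"
      have UC: "U \<in> C" unfolding U_def by (rule uugg(1))
      have predU: "pred U \<notin> loss_argmin L q" using tth[of k] nq unfolding U_def tt_def q_def by simp
      have qkK: "qk \<in> Kset" unfolding qk_def using Kmem wwZ ww s1 by simp
      have qkY: "\<forall>y. y \<notin> Y \<longrightarrow> qk$y = 0" and qkb: "\<forall>y\<in>Y. c0 \<le> qk$y \<and> qk$y \<le> 2"
        using qkK Kp by blast+
      have qkn: "\<forall>y. 0 \<le> qk$y"
      proof
        fix y show "0 \<le> qk$y" using qkY qkb c0pos by (cases "y \<in> Y") force+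
      qed
      have qY: "\<forall>y. y \<notin> Y \<longrightarrow> q$y = 0" using qK Kp by blast
      have a: "q \<bullet> psi v + \<delta> \<le> q \<bullet> psi U" using gap UC predU by blast
      have hk: "real k \<le> real (h k)" using seq_suble[OF hmono, of k] by simp
      have b0: "qk \<bullet> psi U \<le> qk \<bullet> psi v + R / (real (h k) + 1)"
        using keyk[of \<sigma> "h k"] s1 v unfolding qk_def U_def R_def by simp
      have "R / (real (h k) + 1) \<le> R / (real k + 1)"
        using hk Rnn by (intro divide_left_mono) auto
      with b0 have b: "qk \<bullet> psi U \<le> qk \<bullet> psi v + R / (real k + 1)" by simp
      have Rk: "R / (real k + 1) \<le> R"
      proof -
        have "R * 1 \<le> R * (real k + 1)" using Rnn by (intro mult_left_mono) auto
        then show ?thesis by (simp add: divide_le_eq)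
      qed
      have nqq: "norm (q - qk) = c0 * e k"
      proof -
        have "q - qk = (\<sigma>*c0) *\<^sub>R (wl - ww (h k))" unfolding q_def qk_def by (simp add: algebra_simps)
        then have "norm (q - qk) = \<bar>\<sigma>*c0\<bar> * norm (wl - ww (h k))" by simp
        also have "\<dots> = c0 * e k" using s1 c0pos unfolding e_def by (simp add: abs_mult norm_minus_commute)
        finally show ?thesis .
      qed
      have nqq2: "norm (qk - q) = c0 * e k" using nqq by (simp add: norm_minus_commute)
      have c: "q \<bullet> psi U \<le> qk \<bullet> psi U + c0 * e k * S U"
      proof -
        have "\<bar>(q - qk) \<bullet> psi U\<bar> \<le> norm (q - qk) * S U"
          unfolding S_def using qY qkY psinn UC by (intro abs_inner_bound) auto
        then show ?thesis using nqq by (simp add: inner_diff_left)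
      qed
      have d: "qk \<bullet> psi v \<le> q \<bullet> psi v + c0 * e k * S v"
      proof -
        have "\<bar>(qk - q) \<bullet> psi v\<bar> \<le> norm (qk - q) * S v"
          unfolding S_def using qY qkY psinn v by (intro abs_inner_bound) auto
        then show ?thesis using nqq2 by (simp add: inner_diff_left)
      qed
      have ee: "c0 * S U \<le> qk \<bullet> psi U"
        unfolding S_def using qkb qkn psinn UC by (intro inner_lower) auto
      have f: "qk \<bullet> psi v \<le> 2 * S v"
        unfolding S_def using qkY qkb psinn v by (intro inner_upper) auto
      have cSU: "c0 * S U \<le> 2 * S v + R" using ee b f Rk by linarith
      have enn: "0 \<le> e k" unfolding e_def by simp
      have "e k * (c0 * S U) \<le> e k * (2 * S v + R)" using cSU enn by (rule mult_left_mono)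
      then have "c0 * e k * S U \<le> e k * (2 * S v + R)" by (simp add: mult.commute mult.left_commute)
      then show ?thesis using a b c d unfolding D_def by (simp add: algebra_simps)
    qed
    have dD: "0 < \<delta> / (2 * (D + 1))" using dpos Dnn by simp
    obtain N1 where N1: "\<forall>k\<ge>N1. norm (ww (h k) - wl) < \<delta> / (2 * (D + 1))"
      using LIMSEQ_D[OF wlim dD] by blast
    obtain N2 :: nat where N2: "R * 2 / \<delta> < real N2" using reals_Archimedean2 by blast
    define k where "k = max N1 N2"
    have ek: "e k < \<delta> / (2 * (D + 1))" using N1 unfolding k_def e_def by simp
    have "e k * D \<le> e k * (D + 1)" unfolding e_def by (intro mult_left_mono) auto
    also have "\<dots> < \<delta> / (2 * (D + 1)) * (D + 1)" using ek Dnn by (intro mult_strict_right_mono) auto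
    also have "\<dots> = \<delta> / 2"
    proof -
      have gen: "\<And>X::real. X \<noteq> 0 \<Longrightarrow> \<delta> / (2 * X) * X = \<delta> / 2" by simp
      show ?thesis using gen[of "D + 1"] Dnn by simp
    qed
    finally have h1: "e k * D < \<delta> / 2" .
    have "R / (real k + 1) < \<delta> / 2"
    proof -
      have "R * 2 / \<delta> < real k + 1" using N2 unfolding k_def by simp
      then have "R * 2 < (real k + 1) * \<delta>" using dpos by (simp add: divide_less_eq)
      then show ?thesis by (simp add: divide_less_eq field_simps)
    qed
    moreover note bound[of k] h1
    ultimately show False by linarith
  qed
  have ts1: "p \<bullet> column ts L + c0 * (wl \<bullet> column ts L) \<le> p \<bullet> column t' L + c0 * (wl \<bullet> column t' L)" for t'
    using lim[of 1] unfolding loss_argmin_def by (simp add: inner_add_left)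
  have ts2: "p \<bullet> column ts L - c0 * (wl \<bullet> column ts L) \<le> p \<bullet> column t' L - c0 * (wl \<bullet> column t' L)" for t'
    using lim[of "-1"] unfolding loss_argmin_def by (simp add: inner_add_left inner_diff_left)
  have tsA: "ts \<in> loss_argmin L p" unfolding loss_argmin_def
    using ts1 ts2 by (auto intro: add_le_imp_le_left) (smt (verit) ts1 ts2)
  have weq: "wl \<bullet> column ts L = wl \<bullet> column t' L" if "t' \<in> loss_argmin L p" for t'
  proof -
    have pe: "p \<bullet> column ts L = p \<bullet> column t' L" using argmin_eq[OF tsA that] .
    have "c0 * (wl \<bullet> column ts L) = c0 * (wl \<bullet> column t' L)" using ts1[of t'] ts2[of t'] pe by linarith
    then show ?thesis using c0pos by simp
  qed
  have "wl \<in> K0" unfolding K0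
  proof (intro CollectI conjI allI impI)
    fix y assume "p$y = 0" then show "wl$y = 0" using wlY YY by blast
  next
    show "(\<Sum>i\<in>UNIV. wl$i) = 0" by (rule wls)
  next
    fix t' assume "t' \<in> loss_argmin L p"
    then show "wl \<bullet> column t L = wl \<bullet> column t' L" using weq[OF tA] weq by simp
  qed
  then have "wl \<bullet> wl = 0" by (rule wlO)
  then show False using wln by simp
qed



theorem mainTheorem11:
  fixes L :: "real ^ 'k ^ 'n" and p :: "real ^ 'n" and t :: 'k
  assumes L_nonneg: "\<forall>i j. 0 \<le> L $ i $ j"
    and standing: "\<forall>t0. \<exists>q\<in>prob_simplex. loss_argmin L q = {t0}"
    and p_simplex: "p \<in> prob_simplex"
    and t_argmin: "t \<in> loss_argmin L p"
  shows "\<forall>d. CCdim L = enat d \<longrightarrow>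
           int d \<ge> int (l0norm p) - int (mu_dim (trigger_set L t) p) - 1"
proof (intro allI impI)
  fix d assume CC: "CCdim L = enat d"
  have ex: "\<exists>d. convex_calibrated_in_dim L d"
  proof (rule ccontr)
    assume "\<not> (\<exists>d. convex_calibrated_in_dim L d)"
    then have "CCdim L = \<infinity>" unfolding CCdim_def by simp
    with CC show False by simp
  qed
  have dL: "(LEAST d. convex_calibrated_in_dim L d) = d" using CC ex unfolding CCdim_def by simp
  have ccd: "convex_calibrated_in_dim L d" using LeastI_ex[OF ex] dL by simp
  obtain C psi where C: "C \<subseteq> Rd d" "convex_fset C" "\<forall>u\<in>C. \<forall>i. 0 \<le> psi u $ i"
      "\<forall>i. convex_fon C (\<lambda>u. psi u $ i)" "calibrated L C psi"
    using ccd unfolding convex_calibrated_in_dim_def by blast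
  obtain pred :: "(nat \<Rightarrow> real) \<Rightarrow> 'k" where cal:
    "\<forall>q\<in>prob_simplex. (INF u\<in>{u\<in>C. pred u \<notin> loss_argmin L q}. ereal (q \<bullet> psi u))
        > (INF u\<in>C. ereal (q \<bullet> psi u))"
    using C(5) unfolding calibrated_def by blast
  define K0 where "K0 = {w. (\<forall>y. p$y = 0 \<longrightarrow> w$y = 0) \<and> (\<Sum>i\<in>UNIV. w$i) = 0 \<and>
              (\<forall>t'. t' \<in> loss_argmin L p \<longrightarrow> w \<bullet> column t L = w \<bullet> column t' L)}"
  have K0F: "K0 \<subseteq> feasible_dirs (trigger_set L t) p \<inter> uminus ` feasible_dirs (trigger_set L t) p"
  proof
    fix w assume w: "w \<in> K0"
    have "w \<in> feasible_dirs (trigger_set L t) p"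
      using K0_feasible[OF p_simplex t_argmin] w unfolding K0_def by blast
    moreover have "-w \<in> K0" using w unfolding K0_def by (simp add: sum_negf)
    then have "-w \<in> feasible_dirs (trigger_set L t) p"
      using K0_feasible[OF p_simplex t_argmin] unfolding K0_def by blast
    then have "w \<in> uminus ` feasible_dirs (trigger_set L t) p"
      by (rule image_eqI[where x="-w", rotated]) simp
    ultimately show "w \<in> feasible_dirs (trigger_set L t) p \<inter> uminus ` feasible_dirs (trigger_set L t) p"
      by blast
  qed
  have dimle: "dim K0 \<le> mu_dim (trigger_set L t) p" unfolding mu_dim_def using dim_subset[OF K0F] .
  show "int d \<ge> int (l0norm p) - int (mu_dim (trigger_set L t) p) - 1"
  proof (rule ccontr)
    assume "\<not> int d \<ge> int (l0norm p) - int (mu_dim (trigger_set L t) p) - 1"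
    then have "dim K0 + d + 1 < card {i. p$i \<noteq> 0}" using dimle unfolding l0norm_def by linarith
    then show False using main_contra[OF p_simplex t_argmin C(1-4) cal K0_def] by blast
  qed
qed


end
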